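(* Let $C$ be a conformal algebra satisfying a pseudo-identity $\sum_{\sigma\in S_n}(\sigma\otimes_H\mathrm{id}_C)\,t^*_\sigma(a_{1\sigma},\dots,a_{n\sigma})=0$ for all $a_1,\dots,a_n\in C$ (where each $t_\sigma$ is a linear combination of bracketings of an $n$-letter word). Let $\pi=(m_1,\dots,m_n)$ be positive integers, $G_i\in H^{\otimes m_i}$, $a_i\in C$ and $A_i=G_i\otimes_H a_i\in H^{\otimes m_i}\otimes_H C$. Then, for the expanded pseudoproduct, $$\sum_{\sigma\in S_n}(\sigma_\pi\otimes_H\mathrm{id}_C)\,t^*_\sigma(A_{1\sigma},\dots,A_{n\sigma})=0,$$ where $\sigma_\pi\in S_{m_1+\cdots+m_n}$ is the permutation with $\sigma_\pi\big((\Delta^{(m_{1\sigma})}\otimes\cdots\otimes\Delta^{(m_{n\sigma})})(F)\big)=(\Delta^{(m_1)}\otimes\cdots\otimes\Delta^{(m_n)})(\sigma(F))$ for all $F\in H^{\otimes n}$, i.e. $\sigma_\pi$ permutes the consecutive blocks of tensor factors (the $k$-th block having length $m_{k\sigma}$) by moving the $k$-th block to block position $k\sigma$, preserving order within blocks.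
   Context: $\Bbbk$ is a field of characteristic $0$, $H=\Bbbk[D]$ with Hopf structure $\Delta(D)=D\otimes1+1\otimes D$, $\varepsilon(D)=0$, $S(D)=-D$; iterated coproduct $\Delta^{(1)}=\mathrm{id}$, $\Delta^{(k+1)}=(\mathrm{id}\otimes\Delta^{(k)})\Delta$; $H$ acts on $H^{\otimes n}$ from the right by $(f_1\otimes\cdots\otimes f_n)h=f_1h_{(1)}\otimes\cdots\otimes f_nh_{(n)}$ and $H^{\otimes n}\otimes_H M$ is taken w.r.t. this action. A conformal algebra is a unital left $H$-module $C$ with bilinear operations $a_{(n)}b$ ($n\ge0$) such that $a_{(n)}b=0$ for $n\gg0$, $(Da)_{(n)}b=-na_{(n-1)}b$, $a_{(n)}(Db)=D(a_{(n)}b)+na_{(n-1)}b$. Pseudoproduct $a*b=\sum_{s\ge0}\frac{(-D)^s}{s!}\otimes1\otimes_H(a_{(s)}b)$; expanded pseudoproduct: if $a*b=\sum_i f_i\otimes g_i\otimes_H c_i$ then $(F\otimes_H a)*(G\otimes_H b)=\sum_iF\Delta^{(n)}(f_i)\otimes G\Delta^{(m)}(g_i)\otimes_H c_i$ for $F\in H^{\otimes n},G\in H^{\otimes m}$. For a bracketing $t$ and arguments $B_i\in H^{\otimes m_i}\otimes_HC$, $t^*(B_1,\dots,B_n)$ is obtained by replacing each product by the expanded pseudoproduct (elements $a\in C$ are regarded as $1\otimes_Ha$). $i\sigma$ denotes the image of $i$ under $\sigma$; for a permutation $\tau$ of tensor factors, $\tau\otimes_H\mathrm{id}_C$ is the induced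 map, where $\sigma\in S_n$ acts on $H^{\otimes n}$ by sending the $k$-th factor to position $k\sigma$. *)

theory Defs
  imports Main HOL.Vector_Spaces "HOL-Combinatorics.Permutations"
begin

text \<open>
  H = k[D].  An element of H^{\<otimes>N} is identified with a polynomial in
  x_1..x_N (D^{e_1}\<otimes>...\<otimes>D^{e_N} corresponds to x^e); the right H-action is
  F h = F(x) h(x_1+...+x_N).  A representative of an element of H^{\<otimes>N} \<otimes>_H C is a finite
  formal sum of terms (e, c), e an exponent list of length N and c in C, meaning
  the sum of x^e \<otimes> c (scalars of k are absorbed into c).
\<close>

type_synonym 'c tsum = "(nat list \<times> 'c) list"

text \<open>Conformal algebra: a k-vector space C (scale sc) with linear D, and
  k-bilinear products pr n a b = a_(n) b, local and sesquilinear.\<close>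
definition conformal_algebra ::
  "('k::field_char_0 \<Rightarrow> 'c::ab_group_add \<Rightarrow> 'c) \<Rightarrow> ('c \<Rightarrow> 'c) \<Rightarrow> (nat \<Rightarrow> 'c \<Rightarrow> 'c \<Rightarrow> 'c) \<Rightarrow> bool"
where
  "conformal_algebra sc Dc pr \<longleftrightarrow>
     vector_space sc \<and> module_hom sc sc Dc \<and>
     (\<forall>n a. module_hom sc sc (pr n a)) \<and>
     (\<forall>n b. module_hom sc sc (\<lambda>a. pr n a b)) \<and>
     (\<forall>a b. \<exists>N. \<forall>n\<ge>N. pr n a b = 0) \<and>
     (\<forall>n a b. pr n (Dc a) b = - sc (of_nat n) (pr (n - 1) a b)) \<and>
     (\<forall>n a b. pr n a (Dc b) = Dc (pr n a b) + sc (of_nat n) (pr (n - 1) a b))"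

text \<open>Coefficient function of a formal sum (its value in H^{\<otimes>N} \<otimes>_k C).\<close>
definition coefs :: "'c::ab_group_add tsum \<Rightarrow> nat list \<Rightarrow> 'c" where
  "coefs T e = sum_list (map snd (filter (\<lambda>p. fst p = e) T))"

text \<open>L(P) = (x_1+...+x_N) P - D P; its range is exactly the kernel of
  H^{\<otimes>N} \<otimes>_k C \<rightarrow> H^{\<otimes>N} \<otimes>_H C.\<close>
definition Lmap :: "('c::ab_group_add \<Rightarrow> 'c) \<Rightarrow> 'c tsum \<Rightarrow> 'c tsum" where
  "Lmap Dc P = [(e[i := e ! i + 1], c). (e, c) \<leftarrow> P, i \<leftarrow> [0..<length e]]
              @ [(e, - Dc c). (e, c) \<leftarrow> P]"

definition zero_q :: "('c::ab_group_add \<Rightarrow> 'c) \<Rightarrow> (nat list \<Rightarrow> 'c) \<Rightarrow> bool" where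
  "zero_q Dc F \<longleftrightarrow> (\<exists>P. F = coefs (Lmap Dc P))"

text \<open>Monomials of (x_1+...+x_n)^s x^e, n = length e (with multiplicity).\<close>
fun sumpow :: "nat \<Rightarrow> nat list \<Rightarrow> nat list list" where
  "sumpow 0 e = [e]"
| "sumpow (Suc s) e = [f[i := f ! i + 1]. f \<leftarrow> sumpow s e, i \<leftarrow> [0..<length e]]"

definition bnd :: "(nat \<Rightarrow> 'c::zero \<Rightarrow> 'c \<Rightarrow> 'c) \<Rightarrow> 'c \<Rightarrow> 'c \<Rightarrow> nat" where
  "bnd pr a b = (LEAST N. \<forall>s\<ge>N. pr s a b = 0)"

text \<open>Expanded pseudoproduct:
  (F \<otimes>_H a) * (G \<otimes>_H b) = sum_s F \<Delta>^{(n)}((-D)^s/s!) \<otimes> G \<otimes>_H a_(s) b.\<close>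
definition pp :: "('k::field_char_0 \<Rightarrow> 'c::ab_group_add \<Rightarrow> 'c) \<Rightarrow> (nat \<Rightarrow> 'c \<Rightarrow> 'c \<Rightarrow> 'c)
    \<Rightarrow> 'c tsum \<Rightarrow> 'c tsum \<Rightarrow> 'c tsum" where
  "pp sc pr T U = [(f @ e2, sc ((- 1) ^ s / fact s) (pr s a b)).
      (e1, a) \<leftarrow> T, (e2, b) \<leftarrow> U, s \<leftarrow> [0..<bnd pr a b], f \<leftarrow> sumpow s e1]"

text \<open>Bracketings (binary trees); leaves are filled in left to right.\<close>
datatype brk = Lf | Nd brk brk

fun leaves :: "brk \<Rightarrow> nat" where
  "leaves Lf = 1"
| "leaves (Nd l r) = leaves l + leaves r"

fun ev :: "('k::field_char_0 \<Rightarrow> 'c::ab_group_add \<Rightarrow> 'c) \<Rightarrow> (nat \<Rightarrow> 'c \<Rightarrow> 'c \<Rightarrow> 'c)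
    \<Rightarrow> brk \<Rightarrow> 'c tsum list \<Rightarrow> 'c tsum" where
  "ev sc pr Lf Bs = hd Bs"
| "ev sc pr (Nd l r) Bs =
     pp sc pr (ev sc pr l (take (leaves l) Bs)) (ev sc pr r (drop (leaves l) Bs))"

definition tstar :: "('k::field_char_0 \<Rightarrow> 'c::ab_group_add \<Rightarrow> 'c) \<Rightarrow> (nat \<Rightarrow> 'c \<Rightarrow> 'c \<Rightarrow> 'c)
    \<Rightarrow> ('k \<times> brk) list \<Rightarrow> 'c tsum list \<Rightarrow> 'c tsum" where
  "tstar sc pr lc Bs = [(e, sc r c). (r, \<tau>) \<leftarrow> lc, (e, c) \<leftarrow> ev sc pr \<tau> Bs]"

text \<open>Permutation of tensor factors (0-indexed): the k-th factor goes to position \<sigma> k.\<close>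
definition perm_list :: "(nat \<Rightarrow> nat) \<Rightarrow> nat list \<Rightarrow> nat list" where
  "perm_list \<sigma> e = map (\<lambda>j. e ! inv \<sigma> j) [0..<length e]"

fun blocks :: "nat list \<Rightarrow> 'a list \<Rightarrow> 'a list list" where
  "blocks [] xs = []"
| "blocks (l # ls) xs = take l xs # blocks ls (drop l xs)"

text \<open>\<sigma>_\<pi>: source blocks have lengths m(\<sigma> 0),...,m(\<sigma>(n-1)); block k moves to block
  position \<sigma> k (order inside blocks preserved).\<close>
definition sigma_pi :: "(nat \<Rightarrow> nat) \<Rightarrow> (nat \<Rightarrow> nat) \<Rightarrow> nat \<Rightarrow> nat list \<Rightarrow> nat list" where
  "sigma_pi \<sigma> m n e =
     concat (map (\<lambda>j. blocks (map (\<lambda>k. m (\<sigma> k)) [0..<n]) e ! inv \<sigma> j) [0..<n])"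

definition act :: "(nat list \<Rightarrow> nat list) \<Rightarrow> 'c tsum \<Rightarrow> 'c tsum" where
  "act p T = map (\<lambda>(e, c). (p e, c)) T"

text \<open>G \<otimes>_H a for G in H^{\<otimes>m} given as a list of (exponent, scalar) pairs.\<close>
definition lift :: "('k \<Rightarrow> 'c \<Rightarrow> 'c) \<Rightarrow> (nat list \<times> 'k) list \<Rightarrow> 'c \<Rightarrow> 'c tsum" where
  "lift sc G a = map (\<lambda>(e, r). (e, sc r a)) G"

end

theory Submission
  imports Defs "HOL-Library.Multiset"
begin


lemma coefs_Nil[simp]: "coefs [] e = 0"
  by (simp add: coefs_def)
lemma coefs_Cons: "coefs (x # T) e = (if fst x = e then snd x else 0) + coefs T e"
  by (simp add: coefs_def)
lemma coefs_append[simp]: "coefs (T @ U) e = coefs T e + coefs U e"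
  by (simp add: coefs_def)
lemma coefs_concat: "coefs (concat Ts) e = (\<Sum>T\<leftarrow>Ts. coefs T e)"
  by (induction Ts) auto
lemma coefs_mset: "mset T = mset U \<Longrightarrow> coefs T e = coefs U e"
proof -
  assume "mset T = mset U"
  then have "mset (map snd (filter (\<lambda>p. fst p = e) T)) = mset (map snd (filter (\<lambda>p. fst p = e) U))"
    by (simp add: mset_filter)
  then show ?thesis unfolding coefs_def by (metis sum_mset_sum_list)
qed

lemma coefs_map_add:
  "coefs (map (\<lambda>x. (k x, v x + w x)) xs) e = coefs (map (\<lambda>x. (k x, v x)) xs) e + coefs (map (\<lambda>x. (k x, w x)) xs) e"
  by (induction xs) (auto simp: coefs_Cons algebra_simps)

lemma coefs_zero_vals: "(\<forall>x\<in>set xs. snd x = 0) \<Longrightarrow> coefs xs e = 0"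
  by (induction xs) (auto simp: coefs_Cons)

definition bindT :: "'c tsum \<Rightarrow> (nat list \<Rightarrow> 'c \<Rightarrow> 'c tsum) \<Rightarrow> 'c tsum" where
  "bindT T K = concat (map (\<lambda>(e, c). K e c) T)"

definition additiveK :: "(nat list \<Rightarrow> 'c::ab_group_add \<Rightarrow> 'c tsum) \<Rightarrow> bool" where
  "additiveK K \<longleftrightarrow> (\<forall>x c d e. coefs (K x (c + d)) e = coefs (K x c) e + coefs (K x d) e)"

lemma additiveK_zero: "additiveK K \<Longrightarrow> coefs (K x 0) e = 0"
  unfolding additiveK_def by (metis add.right_neutral add_left_cancel)

lemma bindT_append[simp]: "bindT (T @ U) K = bindT T K @ bindT U K"
  by (simp add: bindT_def)
lemma bindT_Nil[simp]: "bindT [] K = []"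
  by (simp add: bindT_def)
lemma bindT_Cons[simp]: "bindT ((e, c) # T) K = K e c @ bindT T K"
  by (simp add: bindT_def)

lemma coefs_bindT:
  assumes K: "additiveK K" and S: "finite S" "fst ` set T \<subseteq> S"
  shows "coefs (bindT T K) e = (\<Sum>x\<in>S. coefs (K x (coefs T x)) e)"
  using S(2)
proof (induction T)
  case Nil
  then show ?case by (simp add: additiveK_zero[OF K])
next
  case (Cons p T)
  obtain e0 c0 where p: "p = (e0, c0)" by force
  have e0S: "e0 \<in> S" using Cons.prems p by auto
  have IH: "coefs (bindT T K) e = (\<Sum>x\<in>S. coefs (K x (coefs T x)) e)"
    using Cons by auto
  have "coefs (K x (coefs (p # T) x)) e = coefs (K x (if e0 = x then c0 else 0)) e + coefs (K x (coefs T x)) e" for x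
  proof -
    have "coefs ((e0,c0) # T) x = (if e0 = x then c0 else 0) + coefs T x" by (simp add: coefs_Cons)
    then show ?thesis using K unfolding additiveK_def p by metis
  qed
  then have "(\<Sum>x\<in>S. coefs (K x (coefs (p # T) x)) e)
      = (\<Sum>x\<in>S. coefs (K x (if e0 = x then c0 else 0)) e + coefs (K x (coefs T x)) e)"
    by simp
  also have "\<dots> = (\<Sum>x\<in>S. coefs (K x (if e0 = x then c0 else 0)) e) + (\<Sum>x\<in>S. coefs (K x (coefs T x)) e)"
    by (simp add: sum.distrib)
  also have "(\<Sum>x\<in>S. coefs (K x (if e0 = x then c0 else 0)) e) = coefs (K e0 c0) e"
  proof -
    have "(\<Sum>x\<in>S. coefs (K x (if e0 = x then c0 else 0)) e) = (\<Sum>x\<in>S. if x = e0 then coefs (K e0 c0) e else 0)"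
      by (rule sum.cong) (auto simp: additiveK_zero[OF K])
    also have "\<dots> = coefs (K e0 c0) e" using e0S S(1) by simp
    finally show ?thesis .
  qed
  finally have X: "(\<Sum>x\<in>S. coefs (K x (coefs (p # T) x)) e) = coefs (K e0 c0) e + (\<Sum>x\<in>S. coefs (K x (coefs T x)) e)" .
  have Y: "coefs (bindT (p # T) K) e = coefs (K e0 c0) e + coefs (bindT T K) e" unfolding p by simp
  show ?case by (simp only: X Y IH)
qed

lemma bindT_cong:
  assumes K: "additiveK K" and eq: "\<And>e. coefs T e = coefs T' e"
  shows "coefs (bindT T K) e = coefs (bindT T' K) e"
proof -
  let ?S = "fst ` set T \<union> fst ` set T'"
  have "coefs (bindT T K) e = (\<Sum>x\<in>?S. coefs (K x (coefs T x)) e)"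
    by (rule coefs_bindT[OF K]) auto
  also have "\<dots> = (\<Sum>x\<in>?S. coefs (K x (coefs T' x)) e)" using eq by simp
  also have "\<dots> = coefs (bindT T' K) e"
    by (rule coefs_bindT[OF K, symmetric]) auto
  finally show ?thesis .
qed

lemma mset_concat_map: "mset (concat (map f xs)) = (\<Sum>x\<leftarrow>xs. mset (f x))"
  by (induction xs) auto

lemma sum_list_swap:
  fixes f :: "'a \<Rightarrow> 'b \<Rightarrow> 'm::comm_monoid_add"
  shows "(\<Sum>x\<leftarrow>A. \<Sum>y\<leftarrow>B. f x y) = (\<Sum>y\<leftarrow>B. \<Sum>x\<leftarrow>A. f x y)"
proof (induction A)
  case Nil
  then show ?case by (induction B) simp_all
next
  case (Cons a A)
  have "(\<Sum>y\<leftarrow>B. \<Sum>x\<leftarrow>a # A. f x y) = (\<Sum>y\<leftarrow>B. f a y + (\<Sum>x\<leftarrow>A. f x y))" by simp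
  also have "\<dots> = (\<Sum>y\<leftarrow>B. f a y) + (\<Sum>y\<leftarrow>B. \<Sum>x\<leftarrow>A. f x y)" by (rule sum_list_addf)
  finally show ?case using Cons.IH by simp
qed

lemma mset_swap:
  "mset (concat (map (\<lambda>x. concat (map (F x) B)) A)) = mset (concat (map (\<lambda>y. concat (map (\<lambda>x. F x y) A)) B))"
  unfolding mset_concat_map by (rule sum_list_swap)

lemma mset_concat_cong:
  assumes "\<And>x. x \<in> set A \<Longrightarrow> mset (F x) = mset (F' x)"
  shows "mset (concat (map F A)) = mset (concat (map F' A))"
proof -
  have "map (\<lambda>x. mset (F x)) A = map (\<lambda>x. mset (F' x)) A"
    by (rule map_cong) (auto simp: assms)
  then show ?thesis by (simp only: mset_concat_map)
qed

lemma sum_list_map_mset: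
  fixes g :: "'a \<Rightarrow> 'b::comm_monoid_add"
  assumes "mset A = mset A'" shows "sum_list (map g A) = sum_list (map g A')"
proof -
  have "sum_list (map g A) = sum_mset (mset (map g A))" by (rule sum_mset_sum_list[symmetric])
  also have "\<dots> = sum_mset (mset (map g A'))" using assms by simp
  also have "\<dots> = sum_list (map g A')" by (rule sum_mset_sum_list)
  finally show ?thesis .
qed

lemma mset_concat_cong2:
  "mset A = mset A' \<Longrightarrow> mset (concat (map F A)) = mset (concat (map F A'))"
  unfolding mset_concat_map by (rule sum_list_map_mset)



lemma sum_list_concat_map: "(\<Sum>x\<leftarrow>concat (map f xs). F x) = (\<Sum>y\<leftarrow>xs. \<Sum>x\<leftarrow>f y. F x)"
  by (induction xs) auto

lemma mset_sum_single: "mset xs = (\<Sum>x\<leftarrow>xs. {#x#})"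
  by (induction xs) auto

lemma sum_upt_add: "(\<Sum>j\<leftarrow>[0..<a+b]. F j) = (\<Sum>j\<leftarrow>[0..<a]. F j) + (\<Sum>j\<leftarrow>[0..<b]. F (a + j))"
  for F :: "nat \<Rightarrow> 'm::comm_monoid_add"
  by (induction b) (simp_all add: add.assoc)

definition incrK :: "(nat list \<times> 'a) list \<Rightarrow> (nat list \<times> 'a) list" where
  "incrK L = concat (map (\<lambda>p. map (\<lambda>j. ((fst p)[j := fst p ! j + 1], snd p)) [0..<length (fst p)]) L)"

lemma sum_incrK: "(\<Sum>x\<leftarrow>incrK L. F x) = (\<Sum>p\<leftarrow>L. \<Sum>j\<leftarrow>[0..<length (fst p)]. F ((fst p)[j := fst p ! j + 1], snd p))"
  unfolding incrK_def sum_list_concat_map by (simp add: o_def)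

lemma incrK_append[simp]: "incrK (A @ B) = incrK A @ incrK B"
  by (simp add: incrK_def)
lemma incrK_concat: "incrK (concat xs) = concat (map incrK xs)"
  by (induction xs) (auto simp: incrK_def)

lemma mset_incrK_cong: "mset A = mset B \<Longrightarrow> mset (incrK A) = mset (incrK B)"
  unfolding incrK_def by (rule mset_concat_cong2)

lemma sumpow_length: "f \<in> set (sumpow s e) \<Longrightarrow> length f = length e"
  by (induction s arbitrary: f) auto

lemma sumpow_incrK_single: "map (\<lambda>f. (f, r)) (sumpow s g) = (incrK ^^ s) [(g, r)]"
proof (induction s)
  case 0
  then show ?case by simp
next
  case (Suc s)
  have "(incrK ^^ Suc s) [(g, r)] = incrK (map (\<lambda>f. (f, r)) (sumpow s g))"
    using Suc by simp
  also have "\<dots> = concat (map (\<lambda>x. map (\<lambda>j. (x[j := Suc (x ! j)], r)) [0..<length g]) (sumpow s g))"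
    unfolding incrK_def by (auto simp: o_def sumpow_length intro!: arg_cong[where f=concat] map_cong)
  also have "\<dots> = map (\<lambda>f. (f, r)) (sumpow (Suc s) g)"
    by (simp add: map_concat o_def)
  finally show ?case by simp
qed

lemma funpow_incrK_concat: "(incrK ^^ s) (concat xs) = concat (map (incrK ^^ s) xs)"
proof (induction s arbitrary: xs)
  case 0 then show ?case by simp
next
  case (Suc s)
  then show ?case by (simp add: incrK_concat o_def)
qed

lemma sumpow_incrK: "concat (map (\<lambda>p. map (\<lambda>f. (f, snd p)) (sumpow s (fst p))) L) = (incrK ^^ s) L"
proof -
  have "L = concat (map (\<lambda>p. [p]) L)" by (induction L) auto
  then have "(incrK ^^ s) L = (incrK ^^ s) (concat (map (\<lambda>p. [p]) L))"
    by (rule arg_cong)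
  also have "\<dots> = concat (map (\<lambda>p. (incrK ^^ s) [p]) L)"
    by (simp only: funpow_incrK_concat map_map o_def)
  also have "\<dots> = concat (map (\<lambda>p. map (\<lambda>f. (f, snd p)) (sumpow s (fst p))) L)"
    by (simp add: sumpow_incrK_single)
  finally show ?thesis by simp
qed

definition phi :: "(nat list \<times> 'k) list \<Rightarrow> nat \<Rightarrow> (nat list \<times> 'k) list" where
  "phi G s = (incrK ^^ s) G"

definition psi :: "(nat list \<times> 'k::comm_monoid_mult) list list \<Rightarrow> nat list \<Rightarrow> (nat list \<times> 'k) list" where
  "psi Gs e = (if length e = length Gs then
      map (\<lambda>ch. (concat (map fst ch), prod_list (map snd ch))) (product_lists (map2 phi Gs e))
    else [])"

lemma psi_Nil[simp]: "psi [] [] = [([], 1)]"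
  by (simp add: psi_def)

lemma psi_Cons: "psi (G # Gs) (s # e) = concat (map (\<lambda>p. map (\<lambda>q. (fst p @ fst q, snd p * snd q)) (psi Gs e)) (phi G s))"
proof (cases "length e = length Gs")
  case True
  then show ?thesis unfolding psi_def by (simp add: map_concat o_def)
next
  case False
  then show ?thesis unfolding psi_def by simp
qed

lemma psi_len: "length e \<noteq> length Gs \<Longrightarrow> psi Gs e = []"
  by (simp add: psi_def)



lemma phi_Suc: "phi G (Suc s) = incrK (phi G s)"
  by (simp add: phi_def)

lemma mset_psi_Cons: "mset (psi (G # Gs) (s # e)) = (\<Sum>p\<leftarrow>phi G s. \<Sum>q\<leftarrow>psi Gs e. {#(fst p @ fst q, snd p * snd q)#})"
  unfolding psi_Cons mset_sum_single sum_list_concat_map by (simp add: o_def)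

lemma upt_Suc0: "[0..<Suc n] = 0 # map Suc [0..<n]"
  by (simp only: upt_conv_Cons[OF zero_less_Suc] map_Suc_upt)

lemma concat_map_concat: "concat (map g (concat (map h xs))) = concat (map (\<lambda>x. concat (map g (h x))) xs)"
  by (induction xs) auto

lemma upd_app1: "j < length h \<Longrightarrow> (h @ f)[j := (h @ f) ! j + 1] = h[j := h ! j + 1] @ f"
  by (simp add: list_update_append nth_append)
lemma upd_app2: "(h @ f)[length h + j := (h @ f) ! (length h + j) + 1] = h @ f[j := f ! j + 1]"
  by (simp add: list_update_append nth_append)

lemma sum_split_upd:
  "(\<Sum>j\<leftarrow>[0..<length h + length f]. {#((h @ f)[j := (h @ f) ! j + 1], r)#})
   = (\<Sum>j\<leftarrow>[0..<length h]. {#(h[j := h ! j + 1] @ f, r)#}) + (\<Sum>j\<leftarrow>[0..<length f]. {#(h @ f[j := f ! j + 1], r)#})"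
proof -
  have "map (\<lambda>j. {#((h @ f)[j := (h @ f) ! j + 1], r)#}) [0..<length h] = map (\<lambda>j. {#(h[j := h ! j + 1] @ f, r)#}) [0..<length h]"
    by (rule map_cong[OF refl]) (simp only: upd_app1 set_upt atLeastLessThan_iff)
  then show ?thesis unfolding sum_upt_add upd_app2 by (simp only:)
qed

lemma psi_incr:
  assumes "length e = length Gs"
  shows "mset (concat (map (\<lambda>i. psi Gs (e[i := e ! i + 1])) [0..<length e])) = mset (incrK (psi Gs e))"
  using assms
proof (induction Gs arbitrary: e)
  case Nil
  then show ?case by (simp add: incrK_def)
next
  case (Cons G Gs)
  obtain s e' where e: "e = s # e'" and len: "length e' = length Gs"
    using Cons.prems by (cases e) auto
  have L1: "mset (concat (map (\<lambda>i. psi (G#Gs) (e[i := e ! i + 1])) [0..<length e]))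
     = mset (psi (G#Gs) (Suc s # e')) + mset (concat (map (\<lambda>i. psi (G#Gs) (s # e'[i := e' ! i + 1])) [0..<length e']))"
    unfolding e by (simp only: length_Cons upt_Suc0 list.map map_map o_def list_update_code nth_Cons_0 nth_Cons_Suc concat.simps mset_append) simp
  have A: "mset (psi (G#Gs) (Suc s # e')) = (\<Sum>p\<leftarrow>phi G s. \<Sum>j\<leftarrow>[0..<length (fst p)]. \<Sum>q\<leftarrow>psi Gs e'.
       {#((fst p)[j := fst p ! j + 1] @ fst q, snd p * snd q)#})"
    unfolding mset_psi_Cons phi_Suc sum_incrK by (simp only: fst_conv snd_conv)
  have B0: "mset (concat (map (\<lambda>i. psi (G#Gs) (s # e'[i := e' ! i + 1])) [0..<length e']))
     = (\<Sum>i\<leftarrow>[0..<length e']. \<Sum>p\<leftarrow>phi G s. \<Sum>q\<leftarrow>psi Gs (e'[i := e' ! i + 1]). {#(fst p @ fst q, snd p * snd q)#})"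
    unfolding mset_concat_map mset_psi_Cons by (simp only:)
  also have "\<dots> = (\<Sum>p\<leftarrow>phi G s. \<Sum>i\<leftarrow>[0..<length e']. \<Sum>q\<leftarrow>psi Gs (e'[i := e' ! i + 1]). {#(fst p @ fst q, snd p * snd q)#})"
    by (rule sum_list_swap)
  also have "\<dots> = (\<Sum>p\<leftarrow>phi G s. \<Sum>q\<leftarrow>concat (map (\<lambda>i. psi Gs (e'[i := e' ! i + 1])) [0..<length e']). {#(fst p @ fst q, snd p * snd q)#})"
    unfolding sum_list_concat_map by (simp only:)
  also have "\<dots> = (\<Sum>p\<leftarrow>phi G s. \<Sum>q\<leftarrow>incrK (psi Gs e'). {#(fst p @ fst q, snd p * snd q)#})"
    by (rule arg_cong[where f=sum_list], rule map_cong[OF refl], rule sum_list_map_mset[OF Cons.IH[OF len]])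
  also have "\<dots> = (\<Sum>p\<leftarrow>phi G s. \<Sum>q\<leftarrow>psi Gs e'. \<Sum>j\<leftarrow>[0..<length (fst q)].
       {#(fst p @ (fst q)[j := fst q ! j + 1], snd p * snd q)#})"
    unfolding sum_incrK by (simp only: fst_conv snd_conv)
  finally have B: "mset (concat (map (\<lambda>i. psi (G#Gs) (s # e'[i := e' ! i + 1])) [0..<length e'])) = \<dots>" .
  have "mset (incrK (psi (G#Gs) (s # e'))) = (\<Sum>x\<leftarrow>psi (G#Gs) (s # e'). \<Sum>j\<leftarrow>[0..<length (fst x)]. {#((fst x)[j := fst x ! j + 1], snd x)#})"
    unfolding mset_sum_single sum_incrK by (simp only: fst_conv snd_conv)
  also have "\<dots> = (\<Sum>p\<leftarrow>phi G s. \<Sum>q\<leftarrow>psi Gs e'. \<Sum>j\<leftarrow>[0..<length (fst p) + length (fst q)].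
       {#((fst p @ fst q)[j := (fst p @ fst q) ! j + 1], snd p * snd q)#})"
    unfolding psi_Cons sum_list_concat_map by (simp only: map_map o_def fst_conv snd_conv length_append)
  also have "\<dots> = (\<Sum>p\<leftarrow>phi G s. \<Sum>q\<leftarrow>psi Gs e'.
        (\<Sum>j\<leftarrow>[0..<length (fst p)]. {#((fst p)[j := fst p ! j + 1] @ fst q, snd p * snd q)#})
      + (\<Sum>j\<leftarrow>[0..<length (fst q)]. {#(fst p @ (fst q)[j := fst q ! j + 1], snd p * snd q)#}))"
    by (simp only: sum_split_upd)
  also have "\<dots> = (\<Sum>p\<leftarrow>phi G s. \<Sum>q\<leftarrow>psi Gs e'. \<Sum>j\<leftarrow>[0..<length (fst p)]. {#((fst p)[j := fst p ! j + 1] @ fst q, snd p * snd q)#})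
      + (\<Sum>p\<leftarrow>phi G s. \<Sum>q\<leftarrow>psi Gs e'. \<Sum>j\<leftarrow>[0..<length (fst q)]. {#(fst p @ (fst q)[j := fst q ! j + 1], snd p * snd q)#})"
    by (simp only: sum_list_addf)
  also have "(\<Sum>p\<leftarrow>phi G s. \<Sum>q\<leftarrow>psi Gs e'. \<Sum>j\<leftarrow>[0..<length (fst p)]. {#((fst p)[j := fst p ! j + 1] @ fst q, snd p * snd q)#})
     = (\<Sum>p\<leftarrow>phi G s. \<Sum>j\<leftarrow>[0..<length (fst p)]. \<Sum>q\<leftarrow>psi Gs e'. {#((fst p)[j := fst p ! j + 1] @ fst q, snd p * snd q)#})"
    by (rule arg_cong[where f=sum_list], rule map_cong[OF refl], rule sum_list_swap)
  finally have C: "mset (incrK (psi (G#Gs) (s # e'))) =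
     (\<Sum>p\<leftarrow>phi G s. \<Sum>j\<leftarrow>[0..<length (fst p)]. \<Sum>q\<leftarrow>psi Gs e'. {#((fst p)[j := fst p ! j + 1] @ fst q, snd p * snd q)#})
      + (\<Sum>p\<leftarrow>phi G s. \<Sum>q\<leftarrow>psi Gs e'. \<Sum>j\<leftarrow>[0..<length (fst q)]. {#(fst p @ (fst q)[j := fst q ! j + 1], snd p * snd q)#})" .
  have "mset (incrK (psi (G#Gs) e)) =
     (\<Sum>p\<leftarrow>phi G s. \<Sum>j\<leftarrow>[0..<length (fst p)]. \<Sum>q\<leftarrow>psi Gs e'. {#((fst p)[j := fst p ! j + 1] @ fst q, snd p * snd q)#})
      + (\<Sum>p\<leftarrow>phi G s. \<Sum>q\<leftarrow>psi Gs e'. \<Sum>j\<leftarrow>[0..<length (fst q)]. {#(fst p @ (fst q)[j := fst q ! j + 1], snd p * snd q)#})"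
    using C by (simp only: e)
  then show ?case by (simp only: L1 A B)
qed

lemma psi_sumpow:
  assumes "length e = length Gs"
  shows "mset (concat (map (psi Gs) (sumpow s e))) = mset ((incrK ^^ s) (psi Gs e))"
proof (induction s)
  case 0
  then show ?case by simp
next
  case (Suc s)
  have "concat (map (psi Gs) (sumpow (Suc s) e)) = concat (map (\<lambda>f. concat (map (\<lambda>i. psi Gs (f[i := f ! i + 1])) [0..<length e])) (sumpow s e))"
    by (simp add: concat_map_concat o_def)
  then have "mset (concat (map (psi Gs) (sumpow (Suc s) e))) = mset (concat (map (\<lambda>f. concat (map (\<lambda>i. psi Gs (f[i := f ! i + 1])) [0..<length e])) (sumpow s e)))"
    by (rule arg_cong)
  also have "\<dots> = (\<Sum>f\<leftarrow>sumpow s e. mset (concat (map (\<lambda>i. psi Gs (f[i := f ! i + 1])) [0..<length f])))"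
    unfolding mset_concat_map
    by (rule arg_cong[where f=sum_list], rule map_cong[OF refl]) (simp only: sumpow_length)
  also have "\<dots> = (\<Sum>f\<leftarrow>sumpow s e. mset (incrK (psi Gs f)))"
  proof (rule arg_cong[where f=sum_list], rule map_cong[OF refl])
    fix f assume "f \<in> set (sumpow s e)"
    then have "length f = length Gs" using assms sumpow_length by metis
    then show "mset (concat (map (\<lambda>i. psi Gs (f[i := f ! i + 1])) [0..<length f])) = mset (incrK (psi Gs f))"
      by (rule psi_incr)
  qed
  also have "\<dots> = mset (incrK (concat (map (psi Gs) (sumpow s e))))"
    unfolding incrK_concat mset_concat_map map_map o_def by (simp only:)
  also have "\<dots> = mset (incrK ((incrK ^^ s) (psi Gs e)))"
    using Suc by (rule mset_incrK_cong)
  finally show ?case by simp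
qed



lemma sum_psi_Cons: "(\<Sum>x\<leftarrow>psi (G # Gs) (s # e). F x) = (\<Sum>p\<leftarrow>phi G s. \<Sum>q\<leftarrow>psi Gs e. F (fst p @ fst q, snd p * snd q))"
  unfolding psi_Cons sum_list_concat_map by (simp only: map_map o_def)

lemma sum_psi_append:
  fixes F :: "nat list \<times> 'k::comm_monoid_mult \<Rightarrow> 'm::comm_monoid_add"
  assumes "length e1 = length Gs1"
  shows "(\<Sum>x\<leftarrow>psi (Gs1 @ Gs2) (e1 @ e2). F x) = (\<Sum>p\<leftarrow>psi Gs1 e1. \<Sum>q\<leftarrow>psi Gs2 e2. F (fst p @ fst q, snd p * snd q))"
  using assms
proof (induction Gs1 arbitrary: e1 F)
  case Nil
  then show ?case by simp
next
  case (Cons G Gs1)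
  obtain s e1' where e: "e1 = s # e1'" and len: "length e1' = length Gs1"
    using Cons.prems by (cases e1) auto
  have "(\<Sum>x\<leftarrow>psi ((G # Gs1) @ Gs2) (e1 @ e2). F x)
      = (\<Sum>p\<leftarrow>phi G s. \<Sum>q\<leftarrow>psi (Gs1 @ Gs2) (e1' @ e2). F (fst p @ fst q, snd p * snd q))"
    unfolding e append_Cons sum_psi_Cons by (rule refl)
  also have "\<dots> = (\<Sum>p\<leftarrow>phi G s. \<Sum>p'\<leftarrow>psi Gs1 e1'. \<Sum>q\<leftarrow>psi Gs2 e2. F (fst p @ (fst p' @ fst q), snd p * (snd p' * snd q)))"
    by (rule arg_cong[where f=sum_list], rule map_cong[OF refl]) (simp only: Cons.IH[OF len] fst_conv snd_conv)
  also have "\<dots> = (\<Sum>x\<leftarrow>psi (G # Gs1) e1. \<Sum>q\<leftarrow>psi Gs2 e2. F (fst x @ fst q, snd x * snd q))"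
    unfolding e sum_psi_Cons by (simp only: fst_conv snd_conv append_assoc mult.assoc)
  finally show ?case .
qed

lemma count_mset_map_Cons: "count (image_mset (Cons x) M) (y # ys) = (if x = y then count M ys else 0)"
  by (induction M) auto

lemma count_concat_Cons: "count (mset (concat (map (\<lambda>x. map (Cons x) P) L))) (y # ys) = count (mset L) y * count (mset P) ys"
  by (induction L) (auto simp: count_mset_map_Cons)

lemma count_concat_Cons_Nil: "count (mset (concat (map (\<lambda>x. map (Cons x) P) L))) [] = 0"
  by (induction L) (auto simp: count_eq_zero_iff)

lemma count_product_lists:
  "count (mset (product_lists Ls)) xs = (if length xs = length Ls then \<Prod>i<length Ls. count (mset (Ls ! i)) (xs ! i) else 0)"
proof (induction Ls arbitrary: xs)
  case Nil
  then show ?case by (cases xs) auto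
next
  case (Cons L Ls)
  show ?case
  proof (cases xs)
    case Nil
    then show ?thesis by (simp add: count_concat_Cons_Nil)
  next
    case (Cons y ys)
    then show ?thesis using Cons.IH
      by (simp add: count_concat_Cons prod.lessThan_Suc_shift del: prod.lessThan_Suc)
  qed
qed

lemma mset_product_lists_perm:
  assumes \<sigma>: "\<sigma> permutes {0..<n}" and len: "length Ls = n"
  shows "mset (product_lists (map (\<lambda>j. Ls ! (inv \<sigma> j)) [0..<n]))
       = image_mset (\<lambda>ch. map (\<lambda>j. ch ! (inv \<sigma> j)) [0..<n]) (mset (product_lists Ls))"
proof (rule multiset_eqI)
  fix ys
  let ?p = "\<lambda>ch. map (\<lambda>j. ch ! (inv \<sigma> j)) [0..<n]"
  let ?M = "mset (product_lists Ls)"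
  have inv1: "\<sigma> (inv \<sigma> x) = x" "inv \<sigma> (\<sigma> x) = x" for x
    using permutes_inverses[OF \<sigma>] by auto
  have inr: "\<sigma> k < n" "inv \<sigma> k < n" if "k < n" for k
    using permutes_in_image[OF \<sigma>] permutes_in_image[OF permutes_inv[OF \<sigma>]] that by auto
  show "count (mset (product_lists (map (\<lambda>j. Ls ! (inv \<sigma> j)) [0..<n]))) ys = count (image_mset ?p ?M) ys"
  proof (cases "length ys = n")
    case False
    have "?p -` {ys} \<inter> set_mset ?M = {}" using False by auto
    then show ?thesis using False by (simp add: count_product_lists count_image_mset)
  next
    case True
    note lenys = True
    let ?x0 = "map (\<lambda>k. ys ! (\<sigma> k)) [0..<n]"
    have pre: "?p -` {ys} \<inter> set_mset ?M \<subseteq> {?x0}"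
    proof
      fix x assume x: "x \<in> ?p -` {ys} \<inter> set_mset ?M"
      then have lx: "length x = n" using len by (auto dest: in_set_product_lists_length)
      from x have px: "?p x = ys" by auto
      have "x ! k = ys ! (\<sigma> k)" if "k < n" for k
      proof -
        have "ys ! (\<sigma> k) = ?p x ! (\<sigma> k)" using px by simp
        also have "\<dots> = x ! k" using inr[OF that] inv1 by simp
        finally show ?thesis by simp
      qed
      then have "x = ?x0" using lx by (intro nth_equalityI) auto
      then show "x \<in> {?x0}" by simp
    qed
    have "count (image_mset ?p ?M) ys = (\<Sum>x\<in>?p -` {ys} \<inter> set_mset ?M. count ?M x)"
      by (rule count_image_mset)
    also have "\<dots> = count ?M ?x0"
    proof (cases "?x0 \<in># ?M")
      case True
      have "?p ?x0 = ys"
        using lenys inr inv1 by (intro nth_equalityI) auto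
      then have "?p -` {ys} \<inter> set_mset ?M = {?x0}" using pre True by auto
      then show ?thesis by simp
    next
      case False
      then have "?p -` {ys} \<inter> set_mset ?M = {}" using pre by auto
      then show ?thesis using False by (simp add: count_eq_zero_iff)
    qed
    also have "\<dots> = (\<Prod>k<n. count (mset (Ls ! k)) (ys ! (\<sigma> k)))"
      by (simp add: count_product_lists len)
    also have "\<dots> = (\<Prod>j<n. count (mset (Ls ! (inv \<sigma> j))) (ys ! j))"
    proof -
      have b: "bij_betw (inv \<sigma>) {..<n} {..<n}"
        using permutes_imp_bij[OF permutes_inv[OF \<sigma>]] by (simp add: atLeast0LessThan)
      have "(\<Prod>j<n. count (mset (Ls ! (inv \<sigma> j))) (ys ! j)) = (\<Prod>j<n. count (mset (Ls ! (inv \<sigma> j))) (ys ! (\<sigma> (inv \<sigma> j))))"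
        using inv1 by simp
      also have "\<dots> = (\<Prod>k<n. count (mset (Ls ! k)) (ys ! (\<sigma> k)))"
        by (rule prod.reindex_bij_betw[OF b])
      finally show ?thesis by simp
    qed
    also have "\<dots> = count (mset (product_lists (map (\<lambda>j. Ls ! (inv \<sigma> j)) [0..<n]))) ys"
      using True inr by (simp add: count_product_lists)
    finally show ?thesis by simp
  qed
qed



lemma blocks_concat: "blocks (map length hs) (concat hs) = hs"
  by (induction hs) auto

lemma incrK_mem: "x \<in> set (incrK L) \<Longrightarrow> \<exists>p\<in>set L. length (fst x) = length (fst p)"
  unfolding incrK_def by force

lemma incrK_len: "(\<forall>y\<in>set G. length (fst y) = l) \<Longrightarrow> x \<in> set ((incrK ^^ s) G) \<Longrightarrow> length (fst x) = l"
proof (induction s arbitrary: x)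
  case 0 then show ?case by simp
next
  case (Suc s)
  from Suc.prems(2) have "x \<in> set (incrK ((incrK ^^ s) G))" by simp
  then obtain p where "p \<in> set ((incrK ^^ s) G)" "length (fst x) = length (fst p)"
    using incrK_mem by blast
  then show ?case using Suc.IH[OF Suc.prems(1)] by simp
qed

lemma prod_list_upt: "prod_list (map g [0..<n]) = (\<Prod>j<n. g j)"
  by (induction n) auto
lemma psi_perm:
  assumes \<sigma>: "\<sigma> permutes {0..<n}" and len: "length e = n"
    and Glen: "\<forall>k<n. \<forall>(g, r) \<in> set (G k). length g = m k"
  shows "mset (psi (map G [0..<n]) (perm_list \<sigma> e))
       = image_mset (\<lambda>x. (sigma_pi \<sigma> m n (fst x), snd x)) (mset (psi (map (\<lambda>k. G (\<sigma> k)) [0..<n]) e))"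
proof -
  have inv1: "\<sigma> (inv \<sigma> x) = x" "inv \<sigma> (\<sigma> x) = x" for x
    using permutes_inverses[OF \<sigma>] by auto
  have inr: "\<sigma> k < n" "inv \<sigma> k < n" if "k < n" for k
    using permutes_in_image[OF \<sigma>] permutes_in_image[OF permutes_inv[OF \<sigma>]] that by auto
  define Ls where "Ls = map (\<lambda>k. phi (G (\<sigma> k)) (e ! k)) [0..<n]"
  have lenLs: "length Ls = n" by (simp add: Ls_def)
  have m1: "map2 phi (map (\<lambda>k. G (\<sigma> k)) [0..<n]) e = Ls"
    by (rule nth_equalityI) (auto simp: Ls_def len)
  have m2: "map2 phi (map G [0..<n]) (perm_list \<sigma> e) = map (\<lambda>j. Ls ! (inv \<sigma> j)) [0..<n]"
    by (rule nth_equalityI) (auto simp: Ls_def len perm_list_def inr inv1)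
  define F :: "(nat list \<times> 'a) list \<Rightarrow> nat list \<times> 'a" where
    "F = (\<lambda>ch. (concat (map fst ch), prod_list (map snd ch)))"
  let ?p = "\<lambda>ch. map (\<lambda>j. ch ! (inv \<sigma> j)) [0..<n]"
  have "mset (psi (map G [0..<n]) (perm_list \<sigma> e)) = image_mset F (mset (product_lists (map (\<lambda>j. Ls ! (inv \<sigma> j)) [0..<n])))"
    unfolding psi_def m2 F_def using len by (simp add: perm_list_def)
  also have "\<dots> = image_mset F (image_mset ?p (mset (product_lists Ls)))"
    by (simp only: mset_product_lists_perm[OF \<sigma> lenLs])
  also have "\<dots> = image_mset (\<lambda>x. (sigma_pi \<sigma> m n (fst x), snd x)) (image_mset F (mset (product_lists Ls)))"
    unfolding image_mset.compositionality
  proof (rule image_mset_cong)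
    fix ch assume "ch \<in># mset (product_lists Ls)"
    then have ch: "ch \<in> set (product_lists Ls)" by simp
    have lch: "length ch = n" using in_set_product_lists_length[OF ch] lenLs by simp
    have la: "list_all2 (\<lambda>x ys. x \<in> set ys) ch Ls" using ch unfolding product_lists_set by simp
    have mem: "ch ! k \<in> set (Ls ! k)" if "k < n" for k
      using list_all2_nthD[OF la, of k] that lch by simp
    have lk: "length (fst (ch ! k)) = m (\<sigma> k)" if "k < n" for k
    proof -
      have "ch ! k \<in> set ((incrK ^^ (e ! k)) (G (\<sigma> k)))"
        using mem[OF that] that by (simp add: Ls_def phi_def)
      moreover have "\<forall>y\<in>set (G (\<sigma> k)). length (fst y) = m (\<sigma> k)"
      proof
        fix y assume y: "y \<in> set (G (\<sigma> k))"
        obtain g r where "y = (g, r)" by force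
        with y Glen inr(1)[OF that] show "length (fst y) = m (\<sigma> k)" by auto
      qed
      ultimately show ?thesis using incrK_len by blast
    qed
    have ml: "map (\<lambda>k. m (\<sigma> k)) [0..<n] = map length (map fst ch)"
      by (rule nth_equalityI) (auto simp: lch lk)
    have fst_eq: "sigma_pi \<sigma> m n (concat (map fst ch)) = concat (map fst (?p ch))"
      unfolding sigma_pi_def ml blocks_concat unfolding map_map
      by (rule arg_cong[where f=concat], rule map_cong[OF refl]) (simp add: lch inr)
    have "prod_list (map snd (?p ch)) = (\<Prod>j<n. snd (ch ! (inv \<sigma> j)))"
      by (simp add: prod_list_upt o_def)
    also have "\<dots> = (\<Prod>k<n. snd (ch ! k))"
    proof -
      have b: "bij_betw (inv \<sigma>) {..<n} {..<n}"
        using permutes_imp_bij[OF permutes_inv[OF \<sigma>]] by (simp add: atLeast0LessThan)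
      show ?thesis by (rule prod.reindex_bij_betw[OF b])
    qed
    also have "\<dots> = prod_list (map snd ch)"
    proof -
      have "map snd ch = map (\<lambda>k. snd (ch ! k)) [0..<n]"
        by (rule nth_equalityI) (auto simp: lch)
      then show ?thesis by (simp add: prod_list_upt)
    qed
    finally have snd_eq: "prod_list (map snd (?p ch)) = prod_list (map snd ch)" .
    show "(F \<circ> ?p) ch = ((\<lambda>x. (sigma_pi \<sigma> m n (fst x), snd x)) \<circ> F) ch"
      using fst_eq snd_eq by (simp add: F_def)
  qed
  also have "image_mset F (mset (product_lists Ls)) = mset (psi (map (\<lambda>k. G (\<sigma> k)) [0..<n]) e)"
    unfolding psi_def m1 F_def using len by simp
  finally show ?thesis .
qed



definition cf :: "nat list \<Rightarrow> nat list \<times> 'c \<Rightarrow> 'c::zero" where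
  "cf e x = (if fst x = e then snd x else 0)"

lemma coefs_sum: "coefs T e = (\<Sum>x\<leftarrow>T. cf e x)"
  by (induction T) (simp_all add: coefs_Cons cf_def)

lemma cf_add: "cf e (k, v + w) = cf e (k, v) + cf e (k, (w::'c::monoid_add))"
  by (simp add: cf_def)

lemma sum_bindT: "(\<Sum>x\<leftarrow>bindT T K. F x) = (\<Sum>p\<leftarrow>T. \<Sum>x\<leftarrow>K (fst p) (snd p). F x)"
  unfolding bindT_def sum_list_concat_map by (simp add: case_prod_beta)

lemma coefs_bindT_sum: "coefs (bindT T K) e = (\<Sum>p\<leftarrow>T. coefs (K (fst p) (snd p)) e)"
  unfolding coefs_sum sum_bindT by (rule refl)

lemma sum_list_map_eq_0: "(\<And>x. x \<in> set xs \<Longrightarrow> f x = 0) \<Longrightarrow> (\<Sum>x\<leftarrow>xs. f x) = (0::'m::monoid_add)"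
  by (induction xs) auto

definition cs :: "nat \<Rightarrow> 'k::field_char_0" where "cs s = (- 1) ^ s / fact s"

definition Qb :: "('k::field_char_0 \<Rightarrow> 'c::ab_group_add \<Rightarrow> 'c) \<Rightarrow> (nat \<Rightarrow> 'c \<Rightarrow> 'c \<Rightarrow> 'c) \<Rightarrow> nat list \<Rightarrow> nat list \<Rightarrow> 'c \<Rightarrow> 'c \<Rightarrow> nat \<Rightarrow> 'c tsum" where
  "Qb sc pr e1 e2 a b N = concat (map (\<lambda>s. map (\<lambda>f. (f @ e2, sc (cs s) (pr s a b))) (sumpow s e1)) [0..<N])"

lemma pp_Q: "pp sc pr T U = bindT T (\<lambda>e1 a. bindT U (\<lambda>e2 b. Qb sc pr e1 e2 a b (bnd pr a b)))"
  unfolding pp_def bindT_def Qb_def cs_def by (rule refl)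

lemma sum_Qb: "(\<Sum>x\<leftarrow>Qb sc pr e1 e2 a b N. F x) = (\<Sum>s\<leftarrow>[0..<N]. \<Sum>f\<leftarrow>sumpow s e1. F (f @ e2, sc (cs s) (pr s a b)))"
  unfolding Qb_def sum_list_concat_map by (simp only: map_map o_def)

lemma coefs_Qb: "coefs (Qb sc pr e1 e2 a b N) e = (\<Sum>s\<leftarrow>[0..<N]. \<Sum>f\<leftarrow>sumpow s e1. cf e (f @ e2, sc (cs s) (pr s a b)))"
  unfolding coefs_sum sum_Qb by (rule refl)

definition Psi :: "('k \<Rightarrow> 'c \<Rightarrow> 'c) \<Rightarrow> (nat list \<times> 'k::comm_monoid_mult) list list \<Rightarrow> 'c tsum \<Rightarrow> 'c tsum" where
  "Psi sc Gs T = bindT T (\<lambda>e c. map (\<lambda>x. (fst x, sc (snd x) c)) (psi Gs e))"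

lemma sum_Psi: "(\<Sum>x\<leftarrow>Psi sc Gs T. F x) = (\<Sum>p\<leftarrow>T. \<Sum>q\<leftarrow>psi Gs (fst p). F (fst q, sc (snd q) (snd p)))"
  unfolding Psi_def sum_bindT by (simp only: map_map o_def)

lemma bindT_swap:
  "mset (bindT T (\<lambda>e1 a. bindT U (\<lambda>e2 b. X e1 a e2 b))) = mset (bindT U (\<lambda>e2 b. bindT T (\<lambda>e1 a. X e1 a e2 b)))"
  unfolding bindT_def split_def by (rule mset_swap)

lemma sum_sumpow_psi:
  fixes Y :: "nat list \<times> 'k::comm_monoid_mult \<Rightarrow> 'm::comm_monoid_add"
  assumes "length e1 = length Gs1"
  shows "(\<Sum>f'\<leftarrow>sumpow s e1. \<Sum>q1\<leftarrow>psi Gs1 f'. Y q1) = (\<Sum>q\<leftarrow>psi Gs1 e1. \<Sum>f\<leftarrow>sumpow s (fst q). Y (f, snd q))"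
proof -
  have "(\<Sum>f'\<leftarrow>sumpow s e1. \<Sum>q1\<leftarrow>psi Gs1 f'. Y q1) = (\<Sum>q1\<leftarrow>concat (map (psi Gs1) (sumpow s e1)). Y q1)"
    unfolding sum_list_concat_map by (rule refl)
  also have "\<dots> = (\<Sum>q1\<leftarrow>(incrK ^^ s) (psi Gs1 e1). Y q1)"
    by (rule sum_list_map_mset[OF psi_sumpow[OF assms]])
  also have "\<dots> = (\<Sum>q1\<leftarrow>concat (map (\<lambda>p. map (\<lambda>f. (f, snd p)) (sumpow s (fst p))) (psi Gs1 e1)). Y q1)"
    by (simp only: sumpow_incrK)
  also have "\<dots> = (\<Sum>q\<leftarrow>psi Gs1 e1. \<Sum>f\<leftarrow>sumpow s (fst q). Y (f, snd q))"
    unfolding sum_list_concat_map by (simp only: map_map o_def)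
  finally show ?thesis .
qed

locale CA =
  fixes sc :: "'k::field_char_0 \<Rightarrow> 'c::ab_group_add \<Rightarrow> 'c" and Dc :: "'c \<Rightarrow> 'c"
    and pr :: "nat \<Rightarrow> 'c \<Rightarrow> 'c \<Rightarrow> 'c"
  assumes ca: "conformal_algebra sc Dc pr"
begin

lemma md: "module sc"
  using ca module_iff_vector_space by (auto simp: conformal_algebra_def)

lemma sc_add: "sc r (x + y) = sc r x + sc r y"
  by (rule module.scale_right_distrib[OF md])
lemma sc_sc: "sc r (sc s x) = sc (r * s) x"
  by (rule module.scale_scale[OF md])
lemma sc_zero: "sc r 0 = 0"
  by (rule module.scale_zero_right[OF md])
lemma sc_minus: "sc r (- x) = - sc r x"
  by (rule module.scale_minus_right[OF md])

lemma Dhom: "module_hom sc sc Dc" using ca by (simp add: conformal_algebra_def)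
lemma D_sc: "Dc (sc r x) = sc r (Dc x)"
  using Dhom by (simp add: module_hom_iff)

lemma pr_add1: "pr s (x + y) b = pr s x b + pr s y b"
proof -
  have "module_hom sc sc (\<lambda>a. pr s a b)" using ca by (simp add: conformal_algebra_def)
  then show ?thesis by (simp add: module_hom_iff)
qed
lemma pr_sc1: "pr s (sc r x) b = sc r (pr s x b)"
proof -
  have "module_hom sc sc (\<lambda>a. pr s a b)" using ca by (simp add: conformal_algebra_def)
  then show ?thesis by (simp add: module_hom_iff)
qed
lemma pr_add2: "pr s a (x + y) = pr s a x + pr s a y"
proof -
  have "module_hom sc sc (pr s a)" using ca by (simp add: conformal_algebra_def)
  then show ?thesis by (simp add: module_hom_iff)
qed
lemma pr_sc2: "pr s a (sc r x) = sc r (pr s a x)"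
proof -
  have "module_hom sc sc (pr s a)" using ca by (simp add: conformal_algebra_def)
  then show ?thesis by (simp add: module_hom_iff)
qed

lemma bnd_zero: "bnd pr a b \<le> s \<Longrightarrow> pr s a b = 0"
proof -
  assume s: "bnd pr a b \<le> s"
  have "\<exists>N. \<forall>n\<ge>N. pr n a b = 0" using ca by (simp add: conformal_algebra_def)
  then have "\<forall>n\<ge>bnd pr a b. pr n a b = 0" unfolding bnd_def by (rule LeastI_ex)
  then show ?thesis using s by simp
qed

lemma bnd_le: "(\<And>s. N \<le> s \<Longrightarrow> pr s a b = 0) \<Longrightarrow> bnd pr a b \<le> N"
  unfolding bnd_def by (rule Least_le) simp

lemma Q_bound:
  assumes "bnd pr a b \<le> N"
  shows "coefs (Qb sc pr e1 e2 a b N) e = coefs (Qb sc pr e1 e2 a b (bnd pr a b)) e"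
proof -
  obtain k where N: "N = bnd pr a b + k" using assms le_Suc_ex by blast
  have z: "(\<Sum>s\<leftarrow>[bnd pr a b..<bnd pr a b + k]. \<Sum>f\<leftarrow>sumpow s e1. cf e (f @ e2, sc (cs s) (pr s a b))) = 0"
    by (rule sum_list_map_eq_0)+ (simp add: bnd_zero sc_zero cf_def)
  show ?thesis
    unfolding coefs_Qb N upt_add_eq_append[OF le0] map_append sum_list_append z by simp
qed

lemma Qb_add1: "coefs (Qb sc pr e1 e2 (x + y) b N) e = coefs (Qb sc pr e1 e2 x b N) e + coefs (Qb sc pr e1 e2 y b N) e"
  unfolding coefs_Qb by (simp only: pr_add1 sc_add cf_add sum_list_addf)
lemma Qb_add2: "coefs (Qb sc pr e1 e2 a (x + y) N) e = coefs (Qb sc pr e1 e2 a x N) e + coefs (Qb sc pr e1 e2 a y N) e"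
  unfolding coefs_Qb by (simp only: pr_add2 sc_add cf_add sum_list_addf)

lemma bnd_add1: "bnd pr (x + y) b \<le> bnd pr x b + bnd pr y b"
  by (rule bnd_le) (simp add: pr_add1 bnd_zero)
lemma bnd_add2: "bnd pr a (x + y) \<le> bnd pr a x + bnd pr a y"
  by (rule bnd_le) (simp add: pr_add2 bnd_zero)

lemma Qbb_add1: "coefs (Qb sc pr e1 e2 (x + y) b (bnd pr (x + y) b)) e
   = coefs (Qb sc pr e1 e2 x b (bnd pr x b)) e + coefs (Qb sc pr e1 e2 y b (bnd pr y b)) e"
proof -
  let ?N = "bnd pr x b + bnd pr y b"
  have "coefs (Qb sc pr e1 e2 (x + y) b (bnd pr (x + y) b)) e = coefs (Qb sc pr e1 e2 (x + y) b ?N) e"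
    by (rule Q_bound[symmetric]) (rule bnd_add1)
  also have "\<dots> = coefs (Qb sc pr e1 e2 x b ?N) e + coefs (Qb sc pr e1 e2 y b ?N) e"
    by (rule Qb_add1)
  also have "\<dots> = coefs (Qb sc pr e1 e2 x b (bnd pr x b)) e + coefs (Qb sc pr e1 e2 y b (bnd pr y b)) e"
    by (simp only: Q_bound[of x b ?N] Q_bound[of y b ?N] le_add1 le_add2)
  finally show ?thesis .
qed

lemma Qbb_add2: "coefs (Qb sc pr e1 e2 a (x + y) (bnd pr a (x + y))) e
   = coefs (Qb sc pr e1 e2 a x (bnd pr a x)) e + coefs (Qb sc pr e1 e2 a y (bnd pr a y)) e"
proof -
  let ?N = "bnd pr a x + bnd pr a y"
  have "coefs (Qb sc pr e1 e2 a (x + y) (bnd pr a (x + y))) e = coefs (Qb sc pr e1 e2 a (x + y) ?N) e"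
    by (rule Q_bound[symmetric]) (rule bnd_add2)
  also have "\<dots> = coefs (Qb sc pr e1 e2 a x ?N) e + coefs (Qb sc pr e1 e2 a y ?N) e"
    by (rule Qb_add2)
  also have "\<dots> = coefs (Qb sc pr e1 e2 a x (bnd pr a x)) e + coefs (Qb sc pr e1 e2 a y (bnd pr a y)) e"
    by (simp only: Q_bound[of a x ?N] Q_bound[of a y ?N] le_add1 le_add2)
  finally show ?thesis .
qed

lemma pp_cong1:
  assumes "\<And>e. coefs T e = coefs T' e"
  shows "coefs (pp sc pr T U) e = coefs (pp sc pr T' U) e"
proof -
  have K: "additiveK (\<lambda>e1 a. bindT U (\<lambda>e2 b. Qb sc pr e1 e2 a b (bnd pr a b)))"
    unfolding additiveK_def coefs_bindT_sum by (simp add: Qbb_add1 sum_list_addf)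
  show ?thesis unfolding pp_Q by (rule bindT_cong[OF K assms])
qed

lemma pp_cong2:
  assumes "\<And>e. coefs U e = coefs U' e"
  shows "coefs (pp sc pr T U) e = coefs (pp sc pr T U') e"
proof -
  have K: "additiveK (\<lambda>e2 b. bindT T (\<lambda>e1 a. Qb sc pr e1 e2 a b (bnd pr a b)))"
    unfolding additiveK_def coefs_bindT_sum by (simp add: Qbb_add2 sum_list_addf)
  have "coefs (pp sc pr T U) e = coefs (bindT U (\<lambda>e2 b. bindT T (\<lambda>e1 a. Qb sc pr e1 e2 a b (bnd pr a b)))) e"
    unfolding pp_Q by (rule coefs_mset[OF bindT_swap])
  also have "\<dots> = coefs (bindT U' (\<lambda>e2 b. bindT T (\<lambda>e1 a. Qb sc pr e1 e2 a b (bnd pr a b)))) e"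
    by (rule bindT_cong[OF K assms])
  also have "\<dots> = coefs (pp sc pr T U') e"
    unfolding pp_Q by (rule coefs_mset[OF bindT_swap[symmetric]])
  finally show ?thesis .
qed

end


lemma sum_list_cong: "(\<And>x. x \<in> set xs \<Longrightarrow> f x = g x) \<Longrightarrow> (\<Sum>x\<leftarrow>xs. f x) = (\<Sum>x\<leftarrow>xs. g x)"
  by (rule arg_cong[where f=sum_list], rule map_cong) auto

context CA begin

lemma Qb_sc:
  "coefs (Qb sc pr e1 e2 (sc r1 a) (sc r2 b) (bnd pr (sc r1 a) (sc r2 b))) e
   = (\<Sum>s\<leftarrow>[0..<bnd pr a b]. \<Sum>f\<leftarrow>sumpow s e1. cf e (f @ e2, sc (r1 * r2 * cs s) (pr s a b)))"
proof -
  have le: "bnd pr (sc r1 a) (sc r2 b) \<le> bnd pr a b"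
    by (rule bnd_le) (simp add: pr_sc1 pr_sc2 bnd_zero sc_zero)
  have "coefs (Qb sc pr e1 e2 (sc r1 a) (sc r2 b) (bnd pr (sc r1 a) (sc r2 b))) e
     = coefs (Qb sc pr e1 e2 (sc r1 a) (sc r2 b) (bnd pr a b)) e"
    by (rule Q_bound[symmetric, OF le])
  also have "\<dots> = (\<Sum>s\<leftarrow>[0..<bnd pr a b]. \<Sum>f\<leftarrow>sumpow s e1. cf e (f @ e2, sc (r1 * r2 * cs s) (pr s a b)))"
    unfolding coefs_Qb by (simp only: pr_sc1 pr_sc2 sc_sc mult_ac)
  finally show ?thesis .
qed

lemma inner_psi:
  assumes "length e1 = length Gs1"
  shows "(\<Sum>f'\<leftarrow>sumpow s e1. \<Sum>q\<leftarrow>psi (Gs1 @ Gs2) (f' @ e2). cf e (fst q, sc (snd q) v))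
       = (\<Sum>q1\<leftarrow>psi Gs1 e1. \<Sum>f\<leftarrow>sumpow s (fst q1). \<Sum>q2\<leftarrow>psi Gs2 e2. cf e (f @ fst q2, sc (snd q1 * snd q2) v))"
proof -
  have "(\<Sum>f'\<leftarrow>sumpow s e1. \<Sum>q\<leftarrow>psi (Gs1 @ Gs2) (f' @ e2). cf e (fst q, sc (snd q) v))
      = (\<Sum>f'\<leftarrow>sumpow s e1. \<Sum>q1\<leftarrow>psi Gs1 f'. \<Sum>q2\<leftarrow>psi Gs2 e2. cf e (fst q1 @ fst q2, sc (snd q1 * snd q2) v))"
  proof (rule sum_list_cong)
    fix f' assume "f' \<in> set (sumpow s e1)"
    then have "length f' = length Gs1" using assms sumpow_length by metis
    then show "(\<Sum>q\<leftarrow>psi (Gs1 @ Gs2) (f' @ e2). cf e (fst q, sc (snd q) v))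
      = (\<Sum>q1\<leftarrow>psi Gs1 f'. \<Sum>q2\<leftarrow>psi Gs2 e2. cf e (fst q1 @ fst q2, sc (snd q1 * snd q2) v))"
      by (simp only: sum_psi_append fst_conv snd_conv)
  qed
  also have "\<dots> = (\<Sum>q1\<leftarrow>psi Gs1 e1. \<Sum>f\<leftarrow>sumpow s (fst q1). \<Sum>q2\<leftarrow>psi Gs2 e2. cf e (f @ fst q2, sc (snd q1 * snd q2) v))"
    by (simp only: sum_sumpow_psi[OF assms] fst_conv snd_conv)
  finally show ?thesis .
qed

lemma pp_Psi:
  assumes len: "\<forall>x\<in>set T. length (fst x) = length Gs1"
  shows "coefs (pp sc pr (Psi sc Gs1 T) (Psi sc Gs2 U)) e = coefs (Psi sc (Gs1 @ Gs2) (pp sc pr T U)) e"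
proof -
  have "coefs (pp sc pr (Psi sc Gs1 T) (Psi sc Gs2 U)) e
     = (\<Sum>p\<leftarrow>T. \<Sum>q1\<leftarrow>psi Gs1 (fst p). \<Sum>p'\<leftarrow>U. \<Sum>q2\<leftarrow>psi Gs2 (fst p').
          coefs (Qb sc pr (fst q1) (fst q2) (sc (snd q1) (snd p)) (sc (snd q2) (snd p')) (bnd pr (sc (snd q1) (snd p)) (sc (snd q2) (snd p')))) e)"
    unfolding pp_Q coefs_bindT_sum sum_Psi by (simp only: fst_conv snd_conv)
  also have "\<dots> = (\<Sum>p\<leftarrow>T. \<Sum>q1\<leftarrow>psi Gs1 (fst p). \<Sum>p'\<leftarrow>U. \<Sum>q2\<leftarrow>psi Gs2 (fst p').
          \<Sum>s\<leftarrow>[0..<bnd pr (snd p) (snd p')]. \<Sum>f\<leftarrow>sumpow s (fst q1).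
            cf e (f @ fst q2, sc (snd q1 * snd q2 * cs s) (pr s (snd p) (snd p'))))"
    by (simp only: Qb_sc)
  also have "\<dots> = (\<Sum>p\<leftarrow>T. \<Sum>p'\<leftarrow>U. \<Sum>q1\<leftarrow>psi Gs1 (fst p). \<Sum>q2\<leftarrow>psi Gs2 (fst p').
          \<Sum>s\<leftarrow>[0..<bnd pr (snd p) (snd p')]. \<Sum>f\<leftarrow>sumpow s (fst q1).
            cf e (f @ fst q2, sc (snd q1 * snd q2 * cs s) (pr s (snd p) (snd p'))))"
    by (rule sum_list_cong, rule sum_list_swap)
  also have "\<dots> = (\<Sum>p\<leftarrow>T. \<Sum>p'\<leftarrow>U. \<Sum>q1\<leftarrow>psi Gs1 (fst p).
          \<Sum>s\<leftarrow>[0..<bnd pr (snd p) (snd p')]. \<Sum>q2\<leftarrow>psi Gs2 (fst p'). \<Sum>f\<leftarrow>sumpow s (fst q1).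
            cf e (f @ fst q2, sc (snd q1 * snd q2 * cs s) (pr s (snd p) (snd p'))))"
    by (rule sum_list_cong, rule sum_list_cong, rule sum_list_cong, rule sum_list_swap)
  also have "\<dots> = (\<Sum>p\<leftarrow>T. \<Sum>p'\<leftarrow>U. \<Sum>q1\<leftarrow>psi Gs1 (fst p).
          \<Sum>s\<leftarrow>[0..<bnd pr (snd p) (snd p')]. \<Sum>f\<leftarrow>sumpow s (fst q1). \<Sum>q2\<leftarrow>psi Gs2 (fst p').
            cf e (f @ fst q2, sc (snd q1 * snd q2 * cs s) (pr s (snd p) (snd p'))))"
    by (rule sum_list_cong, rule sum_list_cong, rule sum_list_cong, rule sum_list_cong, rule sum_list_swap)
  also have "\<dots> = (\<Sum>p\<leftarrow>T. \<Sum>p'\<leftarrow>U. \<Sum>s\<leftarrow>[0..<bnd pr (snd p) (snd p')]. \<Sum>q1\<leftarrow>psi Gs1 (fst p).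
          \<Sum>f\<leftarrow>sumpow s (fst q1). \<Sum>q2\<leftarrow>psi Gs2 (fst p').
            cf e (f @ fst q2, sc (snd q1 * snd q2 * cs s) (pr s (snd p) (snd p'))))"
    by (rule sum_list_cong, rule sum_list_cong, rule sum_list_swap)
  also have "\<dots> = (\<Sum>p\<leftarrow>T. \<Sum>p'\<leftarrow>U. \<Sum>s\<leftarrow>[0..<bnd pr (snd p) (snd p')].
          \<Sum>f'\<leftarrow>sumpow s (fst p). \<Sum>q\<leftarrow>psi (Gs1 @ Gs2) (f' @ fst p').
            cf e (fst q, sc (snd q) (sc (cs s) (pr s (snd p) (snd p')))))"
  proof (rule sum_list_cong, rule sum_list_cong, rule sum_list_cong)
    fix p p' s assume p: "p \<in> set T"
    then have l: "length (fst p) = length Gs1" using len by blast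
    show "(\<Sum>q1\<leftarrow>psi Gs1 (fst p). \<Sum>f\<leftarrow>sumpow s (fst q1). \<Sum>q2\<leftarrow>psi Gs2 (fst p').
            cf e (f @ fst q2, sc (snd q1 * snd q2 * cs s) (pr s (snd p) (snd p'))))
        = (\<Sum>f'\<leftarrow>sumpow s (fst p). \<Sum>q\<leftarrow>psi (Gs1 @ Gs2) (f' @ fst p').
            cf e (fst q, sc (snd q) (sc (cs s) (pr s (snd p) (snd p')))))"
      unfolding inner_psi[OF l] by (simp only: sc_sc)
  qed
  also have "\<dots> = coefs (Psi sc (Gs1 @ Gs2) (pp sc pr T U)) e"
    unfolding coefs_sum sum_Psi pp_Q sum_bindT sum_Qb by (simp only: fst_conv snd_conv)
  finally show ?thesis .
qed

end


lemma bindT_mem: "x \<in> set (bindT T K) \<Longrightarrow> \<exists>p\<in>set T. x \<in> set (K (fst p) (snd p))"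
  unfolding bindT_def by (induction T) auto

lemma Qb_mem: "x \<in> set (Qb sc pr e1 e2 a b N) \<Longrightarrow> \<exists>s f. f \<in> set (sumpow s e1) \<and> fst x = f @ e2"
  unfolding Qb_def by auto

lemma pp_mem: "x \<in> set (pp sc pr T U) \<Longrightarrow> \<exists>p\<in>set T. \<exists>p'\<in>set U. \<exists>s f. f \<in> set (sumpow s (fst p)) \<and> fst x = f @ fst p'"
  unfolding pp_Q by (blast dest: bindT_mem Qb_mem)

lemma ev_len: "leaves \<tau> = length as \<Longrightarrow> x \<in> set (ev sc pr \<tau> (map (\<lambda>a. [([0], a)]) as)) \<Longrightarrow> length (fst x) = length as"
proof (induction \<tau> arbitrary: as x)
  case Lf
  then obtain a where "as = [a]" by (cases as) auto
  then show ?case using Lf by simp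
next
  case (Nd l r)
  let ?k = "leaves l"
  have x: "x \<in> set (pp sc pr (ev sc pr l (map (\<lambda>a. [([0], a)]) (take ?k as))) (ev sc pr r (map (\<lambda>a. [([0], a)]) (drop ?k as))))"
    using Nd.prems(2) by (simp add: take_map drop_map)
  from pp_mem[OF x] obtain p p' s f where p: "p \<in> set (ev sc pr l (map (\<lambda>a. [([0], a)]) (take ?k as)))"
    and p': "p' \<in> set (ev sc pr r (map (\<lambda>a. [([0], a)]) (drop ?k as)))"
    and f: "f \<in> set (sumpow s (fst p))" and fx: "fst x = f @ fst p'" by blast
  have l1: "leaves l = length (take ?k as)" using Nd.prems(1) by simp
  have l2: "leaves r = length (drop ?k as)" using Nd.prems(1) by simp
  show ?case using Nd.IH(1)[OF l1 p] Nd.IH(2)[OF l2 p'] sumpow_length[OF f] fx Nd.prems(1) by simp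
qed

lemma Psi_append[simp]: "Psi sc Gs (T @ U) = Psi sc Gs T @ Psi sc Gs U"
  by (simp add: Psi_def)

lemma Psi_concat: "Psi sc Gs (concat Ts) = concat (map (Psi sc Gs) Ts)"
  by (induction Ts) (auto simp: Psi_def)

lemma sum_list_mset_image:
  fixes F :: "'a \<Rightarrow> 'm::comm_monoid_add"
  assumes "mset L1 = image_mset h (mset L2)"
  shows "(\<Sum>x\<leftarrow>L1. F x) = (\<Sum>x\<leftarrow>L2. F (h x))"
proof -
  have "mset L1 = mset (map h L2)" using assms by simp
  then have "(\<Sum>x\<leftarrow>L1. F x) = (\<Sum>x\<leftarrow>map h L2. F x)" by (rule sum_list_map_mset)
  then show ?thesis by (simp add: o_def)
qed

lemma Lmap_eq: "Lmap Dc P = incrK P @ map (\<lambda>x. (fst x, - Dc (snd x))) P"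
  unfolding Lmap_def incrK_def by (simp add: split_def)

lemma act_eq: "act p T = bindT T (\<lambda>e c. [(p e, c)])"
  unfolding act_def bindT_def by (induction T) auto

lemma coefs_act_cong:
  assumes "\<And>e. coefs T e = coefs T' e"
  shows "coefs (act p T) e = coefs (act p T') e"
proof -
  have K: "additiveK (\<lambda>e c. [(p e, c)])"
    unfolding additiveK_def by (simp add: coefs_Cons)
  show ?thesis unfolding act_eq by (rule bindT_cong[OF K assms])
qed

lemma tstar_eq: "tstar sc pr lc Bs = concat (map (\<lambda>x. map (\<lambda>y. (fst y, sc (fst x) (snd y))) (ev sc pr (snd x) Bs)) lc)"
  unfolding tstar_def by (simp add: split_def)

context CA begin

lemma sc_sum_list: "sc r (\<Sum>x\<leftarrow>xs. f x) = (\<Sum>x\<leftarrow>xs. sc r (f x))"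
  by (induction xs) (simp_all add: sc_zero sc_add)

lemma cf_sc: "cf e (k, sc r v) = sc r (cf e (k, v))"
  by (simp add: cf_def sc_zero)

lemma Psi_cong:
  assumes "\<And>e. coefs T e = coefs T' e"
  shows "coefs (Psi sc Gs T) e = coefs (Psi sc Gs T') e"
proof -
  have K: "additiveK (\<lambda>e c. map (\<lambda>x. (fst x, sc (snd x) c)) (psi Gs e))"
    unfolding additiveK_def by (simp add: sc_add coefs_map_add)
  show ?thesis unfolding Psi_def by (rule bindT_cong[OF K assms])
qed

lemma ev_Psi:
  "leaves \<tau> = length Ls \<Longrightarrow>
   coefs (ev sc pr \<tau> (map (\<lambda>x. lift sc (fst x) (snd x)) Ls)) e
   = coefs (Psi sc (map fst Ls) (ev sc pr \<tau> (map (\<lambda>x. [([0], snd x)]) Ls))) e"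
proof (induction \<tau> arbitrary: Ls e)
  case Lf
  then obtain x where Ls: "Ls = [x]" by (cases Ls) auto
  have "psi [fst x] [0] = map (\<lambda>p. (fst p, snd p)) (fst x)"
    by (simp add: psi_Cons phi_def o_def)
  then show ?case unfolding Ls by (simp add: Psi_def lift_def split_def o_def)
next
  case (Nd l r)
  let ?k = "leaves l"
  let ?L1 = "take ?k Ls" and ?L2 = "drop ?k Ls"
  have l1: "leaves l = length ?L1" using Nd.prems(1) by simp
  have l2: "leaves r = length ?L2" using Nd.prems(1) by simp
  let ?S1 = "ev sc pr l (map (\<lambda>x. [([0], snd x)]) ?L1)"
  let ?S2 = "ev sc pr r (map (\<lambda>x. [([0], snd x)]) ?L2)"
  have "coefs (ev sc pr (Nd l r) (map (\<lambda>x. lift sc (fst x) (snd x)) Ls)) e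
      = coefs (pp sc pr (ev sc pr l (map (\<lambda>x. lift sc (fst x) (snd x)) ?L1)) (ev sc pr r (map (\<lambda>x. lift sc (fst x) (snd x)) ?L2))) e"
    by (simp add: take_map drop_map)
  also have "\<dots> = coefs (pp sc pr (Psi sc (map fst ?L1) ?S1) (ev sc pr r (map (\<lambda>x. lift sc (fst x) (snd x)) ?L2))) e"
    by (rule pp_cong1) (rule Nd.IH(1)[OF l1])
  also have "\<dots> = coefs (pp sc pr (Psi sc (map fst ?L1) ?S1) (Psi sc (map fst ?L2) ?S2)) e"
    by (rule pp_cong2) (rule Nd.IH(2)[OF l2])
  also have "\<dots> = coefs (Psi sc (map fst ?L1 @ map fst ?L2) (pp sc pr ?S1 ?S2)) e"
  proof (rule pp_Psi)
    show "\<forall>x\<in>set ?S1. length (fst x) = length (map fst ?L1)"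
    proof
      fix x assume "x \<in> set ?S1"
      then have "x \<in> set (ev sc pr l (map (\<lambda>a. [([0], a)]) (map snd ?L1)))" by (simp add: o_def)
      moreover have "leaves l = length (map snd ?L1)" using l1 by simp
      ultimately show "length (fst x) = length (map fst ?L1)" using ev_len by fastforce
    qed
  qed
  also have "\<dots> = coefs (Psi sc (map fst Ls) (ev sc pr (Nd l r) (map (\<lambda>x. [([0], snd x)]) Ls))) e"
    by (simp add: take_map drop_map flip: map_append)
  finally show ?case .
qed

lemma Psi_Lmap: "coefs (Psi sc Gs (Lmap Dc P)) e = coefs (Lmap Dc (Psi sc Gs P)) e"
proof -
  have part1: "coefs (Psi sc Gs (incrK P)) e = coefs (incrK (Psi sc Gs P)) e"
  proof -
    have "coefs (Psi sc Gs (incrK P)) e = (\<Sum>p\<leftarrow>P. \<Sum>q\<leftarrow>concat (map (\<lambda>i. psi Gs ((fst p)[i := fst p ! i + 1])) [0..<length (fst p)]).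
           cf e (fst q, sc (snd q) (snd p)))"
      unfolding coefs_sum sum_Psi sum_incrK sum_list_concat_map by (simp only: fst_conv snd_conv)
    also have "\<dots> = (\<Sum>p\<leftarrow>P. \<Sum>q\<leftarrow>incrK (psi Gs (fst p)). cf e (fst q, sc (snd q) (snd p)))"
    proof (rule sum_list_cong)
      fix p
      show "(\<Sum>q\<leftarrow>concat (map (\<lambda>i. psi Gs ((fst p)[i := fst p ! i + 1])) [0..<length (fst p)]). cf e (fst q, sc (snd q) (snd p)))
          = (\<Sum>q\<leftarrow>incrK (psi Gs (fst p)). cf e (fst q, sc (snd q) (snd p)))"
      proof (cases "length (fst p) = length Gs")
        case True
        show ?thesis by (rule sum_list_map_mset[OF psi_incr[OF True]])
      next
        case False
        then have A: "concat (map (\<lambda>i. psi Gs ((fst p)[i := fst p ! i + 1])) [0..<length (fst p)]) = []"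
          by (simp add: psi_len)
        have B: "incrK (psi Gs (fst p)) = []" using False by (simp add: psi_len incrK_def)
        show ?thesis unfolding A B by simp
      qed
    qed
    also have "\<dots> = coefs (incrK (Psi sc Gs P)) e"
      unfolding coefs_sum sum_incrK sum_Psi by (simp only: fst_conv snd_conv)
    finally show ?thesis .
  qed
  have part2: "coefs (Psi sc Gs (map (\<lambda>x. (fst x, - Dc (snd x))) P)) e = coefs (map (\<lambda>x. (fst x, - Dc (snd x))) (Psi sc Gs P)) e"
    unfolding coefs_sum sum_Psi by (simp add: o_def sc_minus D_sc sum_Psi)
  show ?thesis unfolding Lmap_eq Psi_append coefs_append part1 part2 by (rule refl)
qed

lemma coefs_tstar: "coefs (tstar sc pr lc Bs) e = (\<Sum>x\<leftarrow>lc. sc (fst x) (coefs (ev sc pr (snd x) Bs) e))"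
  unfolding tstar_eq coefs_sum sum_list_concat_map by (simp add: o_def cf_sc sc_sum_list)

lemma Psi_tstar: "coefs (Psi sc Gs (tstar sc pr lc Bs)) e = (\<Sum>x\<leftarrow>lc. sc (fst x) (coefs (Psi sc Gs (ev sc pr (snd x) Bs)) e))"
  unfolding tstar_eq coefs_sum sum_Psi sum_list_concat_map by (simp add: o_def cf_sc sc_sum_list sc_sc mult.commute)

lemma Psi_act:
  assumes \<sigma>: "\<sigma> permutes {0..<n}" and len: "\<forall>x\<in>set T. length (fst x) = n"
    and Glen: "\<forall>k<n. \<forall>(g, r) \<in> set (G k). length g = m k"
  shows "coefs (Psi sc (map G [0..<n]) (act (perm_list \<sigma>) T)) e
       = coefs (act (sigma_pi \<sigma> m n) (Psi sc (map (\<lambda>k. G (\<sigma> k)) [0..<n]) T)) e"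
proof -
  have "coefs (Psi sc (map G [0..<n]) (act (perm_list \<sigma>) T)) e
      = (\<Sum>p\<leftarrow>T. \<Sum>q\<leftarrow>psi (map G [0..<n]) (perm_list \<sigma> (fst p)). cf e (fst q, sc (snd q) (snd p)))"
    unfolding coefs_sum sum_Psi act_def by (simp add: o_def split_def)
  also have "\<dots> = (\<Sum>p\<leftarrow>T. \<Sum>q\<leftarrow>psi (map (\<lambda>k. G (\<sigma> k)) [0..<n]) (fst p). cf e (sigma_pi \<sigma> m n (fst q), sc (snd q) (snd p)))"
  proof (rule sum_list_cong)
    fix p assume "p \<in> set T"
    then have "length (fst p) = n" using len by blast
    from sum_list_mset_image[OF psi_perm[OF \<sigma> this Glen], of "\<lambda>q. cf e (fst q, sc (snd q) (snd p))"]
    show "(\<Sum>q\<leftarrow>psi (map G [0..<n]) (perm_list \<sigma> (fst p)). cf e (fst q, sc (snd q) (snd p)))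
        = (\<Sum>q\<leftarrow>psi (map (\<lambda>k. G (\<sigma> k)) [0..<n]) (fst p). cf e (sigma_pi \<sigma> m n (fst q), sc (snd q) (snd p)))"
      by simp
  qed
  also have "\<dots> = coefs (act (sigma_pi \<sigma> m n) (Psi sc (map (\<lambda>k. G (\<sigma> k)) [0..<n]) T)) e"
    unfolding coefs_sum act_def by (simp add: o_def split_def sum_Psi)
  finally show ?thesis .
qed

end


theorem proposition3p3:
  fixes sc :: "'k::field_char_0 \<Rightarrow> 'c::ab_group_add \<Rightarrow> 'c"
    and Dc :: "'c \<Rightarrow> 'c" and pr :: "nat \<Rightarrow> 'c \<Rightarrow> 'c \<Rightarrow> 'c"
    and n :: nat and t :: "(nat \<Rightarrow> nat) \<Rightarrow> ('k \<times> brk) list"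
    and m :: "nat \<Rightarrow> nat" and G :: "nat \<Rightarrow> (nat list \<times> 'k) list" and a :: "nat \<Rightarrow> 'c"
  assumes "conformal_algebra sc Dc pr"
    and "\<forall>\<sigma>. \<sigma> permutes {0..<n} \<longrightarrow> (\<forall>(r, \<tau>) \<in> set (t \<sigma>). leaves \<tau> = n)"
    and "\<forall>b :: nat \<Rightarrow> 'c. zero_q Dc (\<lambda>e. \<Sum>\<sigma> \<in> {\<sigma>. \<sigma> permutes {0..<n}}.
           coefs (act (perm_list \<sigma>)
             (tstar sc pr (t \<sigma>) (map (\<lambda>k. [([0], b (\<sigma> k))]) [0..<n]))) e)"
    and "\<forall>k<n. 0 < m k"
    and "\<forall>k<n. \<forall>(e, r) \<in> set (G k). length e = m k"
  shows "zero_q Dc (\<lambda>e. \<Sum>\<sigma> \<in> {\<sigma>. \<sigma> permutes {0..<n}}.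
           coefs (act (sigma_pi \<sigma> m n)
             (tstar sc pr (t \<sigma>) (map (\<lambda>k. lift sc (G (\<sigma> k)) (a (\<sigma> k))) [0..<n]))) e)"
proof -
  interpret CA sc Dc pr by (rule CA.intro) (rule assms(1))
  let ?S = "{\<sigma>. \<sigma> permutes {0..<n}}"
  define Gf where "Gf = map G [0..<n]"
  define X0 where "X0 \<sigma> = act (perm_list \<sigma>) (tstar sc pr (t \<sigma>) (map (\<lambda>k. [([0], a (\<sigma> k))]) [0..<n]))" for \<sigma>
  define X where "X \<sigma> = act (sigma_pi \<sigma> m n) (tstar sc pr (t \<sigma>) (map (\<lambda>k. lift sc (G (\<sigma> k)) (a (\<sigma> k))) [0..<n]))" for \<sigma>
  have "zero_q Dc (\<lambda>e. \<Sum>\<sigma>\<in>?S. coefs (X0 \<sigma>) e)"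
    using assms(3) unfolding X0_def by blast
  then obtain P where P: "(\<lambda>e. \<Sum>\<sigma>\<in>?S. coefs (X0 \<sigma>) e) = coefs (Lmap Dc P)"
    unfolding zero_q_def by blast
  have fin: "finite ?S" by (rule finite_permutations) simp
  obtain xs where xs: "set xs = ?S" "distinct xs" using finite_distinct_list[OF fin] by blast
  have sumxs: "(\<Sum>\<sigma>\<in>?S. f \<sigma>) = (\<Sum>\<sigma>\<leftarrow>xs. f \<sigma>)" for f :: "(nat \<Rightarrow> nat) \<Rightarrow> 'c"
    using sum.distinct_set_conv_list[OF xs(2), of f] xs(1) by simp
  have per: "coefs (Psi sc Gf (X0 \<sigma>)) e = coefs (X \<sigma>) e" if \<sigma>: "\<sigma> permutes {0..<n}" for \<sigma> e
  proof -
    define Ls where "Ls = map (\<lambda>k. (G (\<sigma> k), a (\<sigma> k))) [0..<n]"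
    have lvs: "\<forall>x\<in>set (t \<sigma>). leaves (snd x) = n"
    proof
      fix x assume x: "x \<in> set (t \<sigma>)"
      have all: "\<forall>(r, \<tau>) \<in> set (t \<sigma>). leaves \<tau> = n" using assms(2) \<sigma> by blast
      obtain r \<tau> where xr: "x = (r, \<tau>)" by force
      have "case x of (r, \<tau>) \<Rightarrow> leaves \<tau> = n" using all x by blast
      then show "leaves (snd x) = n" by (simp add: xr)
    qed
    define T0 where "T0 = tstar sc pr (t \<sigma>) (map (\<lambda>k. [([0], a (\<sigma> k))]) [0..<n])"
    have B0: "map (\<lambda>k. [([0], a (\<sigma> k))]) [0..<n] = map (\<lambda>x. [([0], snd x)]) Ls" by (simp add: Ls_def)
    have B: "map (\<lambda>k. lift sc (G (\<sigma> k)) (a (\<sigma> k))) [0..<n] = map (\<lambda>x. lift sc (fst x) (snd x)) Ls"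
      by (simp add: Ls_def)
    have GL: "map (\<lambda>k. G (\<sigma> k)) [0..<n] = map fst Ls" by (simp add: Ls_def)
    have lenLs: "length Ls = n" by (simp add: Ls_def)
    have len: "\<forall>x\<in>set T0. length (fst x) = n"
    proof
      fix x assume "x \<in> set T0"
      then obtain y z where y: "y \<in> set (t \<sigma>)"
        and z: "z \<in> set (ev sc pr (snd y) (map (\<lambda>k. [([0], a (\<sigma> k))]) [0..<n]))" and xz: "fst x = fst z"
        unfolding T0_def tstar_eq by auto
      have eq: "map (\<lambda>k. [([0], a (\<sigma> k))]) [0..<n] = map (\<lambda>a. [([0], a)]) (map (\<lambda>k. a (\<sigma> k)) [0..<n])"
        by simp
      from z have z': "z \<in> set (ev sc pr (snd y) (map (\<lambda>a. [([0], a)]) (map (\<lambda>k. a (\<sigma> k)) [0..<n])))"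
        unfolding eq .
      have "leaves (snd y) = length (map (\<lambda>k. a (\<sigma> k)) [0..<n])" using lvs y by simp
      from ev_len[OF this z'] xz show "length (fst x) = n" by simp
    qed
    have "coefs (Psi sc Gf (X0 \<sigma>)) e = coefs (act (sigma_pi \<sigma> m n) (Psi sc (map (\<lambda>k. G (\<sigma> k)) [0..<n]) T0)) e"
      unfolding X0_def Gf_def T0_def[symmetric] by (rule Psi_act[OF \<sigma> len assms(5)])
    also have "\<dots> = coefs (X \<sigma>) e"
      unfolding X_def
    proof (rule coefs_act_cong)
      fix e
      have "coefs (Psi sc (map fst Ls) (tstar sc pr (t \<sigma>) (map (\<lambda>x. [([0], snd x)]) Ls))) e
          = coefs (tstar sc pr (t \<sigma>) (map (\<lambda>x. lift sc (fst x) (snd x)) Ls)) e"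
        unfolding Psi_tstar coefs_tstar
      proof (rule sum_list_cong)
        fix x assume "x \<in> set (t \<sigma>)"
        then have "leaves (snd x) = length Ls" using lvs lenLs by simp
        then show "sc (fst x) (coefs (Psi sc (map fst Ls) (ev sc pr (snd x) (map (\<lambda>x. [([0], snd x)]) Ls))) e)
            = sc (fst x) (coefs (ev sc pr (snd x) (map (\<lambda>x. lift sc (fst x) (snd x)) Ls)) e)"
          by (simp only: ev_Psi)
      qed
      then show "coefs (Psi sc (map (\<lambda>k. G (\<sigma> k)) [0..<n]) T0) e
          = coefs (tstar sc pr (t \<sigma>) (map (\<lambda>k. lift sc (G (\<sigma> k)) (a (\<sigma> k))) [0..<n])) e"
        unfolding T0_def B0 B GL .
    qed
    finally show ?thesis .
  qed
  have final: "zero_q Dc (\<lambda>e. \<Sum>\<sigma>\<in>?S. coefs (X \<sigma>) e)"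
    unfolding zero_q_def
  proof (rule exI[of _ "Psi sc Gf P"], rule ext)
    fix e
    have "(\<Sum>\<sigma>\<in>?S. coefs (X \<sigma>) e) = (\<Sum>\<sigma>\<in>?S. coefs (Psi sc Gf (X0 \<sigma>)) e)"
      by (rule sum.cong) (simp_all add: per)
    also have "\<dots> = (\<Sum>\<sigma>\<leftarrow>xs. coefs (Psi sc Gf (X0 \<sigma>)) e)"
      by (rule sumxs)
    also have "\<dots> = coefs (Psi sc Gf (concat (map X0 xs))) e"
      by (simp add: Psi_concat coefs_concat o_def)
    also have "\<dots> = coefs (Psi sc Gf (Lmap Dc P)) e"
    proof (rule Psi_cong)
      fix e'
      have "coefs (concat (map X0 xs)) e' = (\<Sum>\<sigma>\<leftarrow>xs. coefs (X0 \<sigma>) e')"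
        by (simp add: coefs_concat o_def)
      also have "\<dots> = (\<Sum>\<sigma>\<in>?S. coefs (X0 \<sigma>) e')"
        by (rule sumxs[symmetric])
      also have "\<dots> = coefs (Lmap Dc P) e'"
        using fun_cong[OF P, of e'] by simp
      finally show "coefs (concat (map X0 xs)) e' = coefs (Lmap Dc P) e'" .
    qed
    also have "\<dots> = coefs (Lmap Dc (Psi sc Gf P)) e"
      by (rule Psi_Lmap)
    finally show "(\<Sum>\<sigma>\<in>?S. coefs (X \<sigma>) e) = coefs (Lmap Dc (Psi sc Gf P)) e" .
  qed
  then show ?thesis unfolding X_def .
qed


end
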